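(* Let $G$ be a discrete group acting effectively on a mixing Smale space $(X,\varphi)$. Then there exists a nonempty finite set $P$ of periodic points of $\varphi$ with $\varphi(P)=P$ such that $gp\in P$ for every $g\in G$ and every $p\in P$.
   Context: A Smale space $(X,\varphi)$ is an infinite compact metric space with a homeomorphism $\varphi$ admitting a local product structure (a bracket map $[\cdot,\cdot]$ defined for nearby points with $[x,x]=x$, $[x,[y,z]]=[x,z]$, $[[x,y],z]=[x,z]$, $\varphi[x,y]=[\varphi x,\varphi y]$, with $\varphi$ uniformly contracting on stable local sets $\{[x,y]=y\}$ and $\varphi^{-1}$ uniformly contracting on unstable local sets $\{[x,y]=x\}$). Mixing: for all nonempty open $U,V$ there is $N$ with $\varphi^n(U)\cap V\neq\emptyset$ for all $n\geq N$. A point $x$ is periodic if $\varphi^k(x)=x$ for some $k\ge1$. An action of $G$ on $(X,\varphi)$ is a homomorphism $G\to\mathrm{Homeo}(X)$ with $g\varphi(x)=\varphi(gx)$; effective means every $g\neq e$ moves some point. *)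

theory Defs
  imports "HOL-Analysis.Analysis" "HOL-Algebra.Group_Action"
begin

text \<open>A Smale space on the carrier X (a subset of a metric space), with homeomorphism
  phi (inverse psi), bracket br defined on pairs at distance at most eps,
  and contraction constant lam (Putnam's axioms B1--B4, C1, C2).\<close>

definition smale_space ::
  "'a::metric_space set \<Rightarrow> ('a \<Rightarrow> 'a) \<Rightarrow> ('a \<Rightarrow> 'a) \<Rightarrow> ('a \<Rightarrow> 'a \<Rightarrow> 'a) \<Rightarrow> real \<Rightarrow> real \<Rightarrow> bool"
where
  "smale_space X phi psi br eps lam \<longleftrightarrow>
     compact X \<and> infinite X \<and> homeomorphism X X phi psi \<and>
     eps > 0 \<and> 0 < lam \<and> lam < 1 \<and>
     (\<forall>x\<in>X. \<forall>y\<in>X. dist x y \<le> eps \<longrightarrow> br x y \<in> X) \<and>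
     continuous_on {(x, y). x \<in> X \<and> y \<in> X \<and> dist x y \<le> eps} (\<lambda>(x, y). br x y) \<and>
     (\<forall>x\<in>X. br x x = x) \<and>
     (\<forall>x\<in>X. \<forall>y\<in>X. \<forall>z\<in>X.
        dist y z \<le> eps \<and> dist x (br y z) \<le> eps \<and> dist x z \<le> eps
        \<longrightarrow> br x (br y z) = br x z) \<and>
     (\<forall>x\<in>X. \<forall>y\<in>X. \<forall>z\<in>X.
        dist x y \<le> eps \<and> dist (br x y) z \<le> eps \<and> dist x z \<le> eps
        \<longrightarrow> br (br x y) z = br x z) \<and>
     (\<forall>x\<in>X. \<forall>y\<in>X.
        dist x y \<le> eps \<and> dist (phi x) (phi y) \<le> eps
        \<longrightarrow> phi (br x y) = br (phi x) (phi y)) \<and>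
     (\<forall>x\<in>X. \<forall>y\<in>X. dist x y \<le> eps \<and> br x y = y
        \<longrightarrow> dist (phi x) (phi y) \<le> lam * dist x y) \<and>
     (\<forall>x\<in>X. \<forall>y\<in>X. dist x y \<le> eps \<and> br x y = x
        \<longrightarrow> dist (psi x) (psi y) \<le> lam * dist x y)"

definition mixing :: "'a::topological_space set \<Rightarrow> ('a \<Rightarrow> 'a) \<Rightarrow> bool" where
  "mixing X phi \<longleftrightarrow>
     (\<forall>U V. openin (top_of_set X) U \<and> openin (top_of_set X) V \<and> U \<noteq> {} \<and> V \<noteq> {}
        \<longrightarrow> (\<exists>N. \<forall>n\<ge>N. (phi ^^ n) ` U \<inter> V \<noteq> {}))"

definition periodic_point :: "('a \<Rightarrow> 'a) \<Rightarrow> 'a \<Rightarrow> bool" where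
  "periodic_point phi x \<longleftrightarrow> (\<exists>k\<ge>1. (phi ^^ k) x = x)"

definition smale_action :: "('g, 'b) monoid_scheme \<Rightarrow> 'a::topological_space set \<Rightarrow> ('a \<Rightarrow> 'a) \<Rightarrow> ('g \<Rightarrow> 'a \<Rightarrow> 'a) \<Rightarrow> bool" where
  "smale_action G X phi act \<longleftrightarrow>
     group_action G X act \<and>
     (\<forall>g\<in>carrier G. continuous_on X (act g)) \<and>
     (\<forall>g\<in>carrier G. \<forall>x\<in>X. act g (phi x) = phi (act g x))"

definition effective_action :: "('g, 'b) monoid_scheme \<Rightarrow> 'a set \<Rightarrow> ('g \<Rightarrow> 'a \<Rightarrow> 'a) \<Rightarrow> bool" where
  "effective_action G X act \<longleftrightarrow>
     (\<forall>g\<in>carrier G. g \<noteq> \<one>\<^bsub>G\<^esub> \<longrightarrow> (\<exists>x\<in>X. act g x \<noteq> x))"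

end

theory Submission
  imports Defs
begin


lemma funpow_in: "(\<And>x. x \<in> X \<Longrightarrow> f x \<in> X) \<Longrightarrow> x \<in> X \<Longrightarrow> (f ^^ k) x \<in> X"
  by (induction k) auto

lemma funpow_cancel:
  assumes "\<And>x. x \<in> X \<Longrightarrow> f x \<in> X" "\<And>x. x \<in> X \<Longrightarrow> g (f x) = x" "x \<in> X" "i \<le> k"
  shows "(g ^^ i) ((f ^^ k) x) = (f ^^ (k - i)) x"
  using assms(4)
proof (induction i)
  case 0 then show ?case by simp
next
  case (Suc i)
  have ki: "k - i = Suc (k - Suc i)" using Suc.prems by simp
  have ih: "(g ^^ i) ((f ^^ k) x) = (f ^^ (k - i)) x" using Suc.IH Suc.prems by simp
  have "(g ^^ Suc i) ((f ^^ k) x) = g ((f ^^ (k - i)) x)" by (simp only: funpow.simps comp_apply ih)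
  also have "\<dots> = g (f ((f ^^ (k - Suc i)) x))" using ki by simp
  also have "\<dots> = (f ^^ (k - Suc i)) x" using assms(2)[OF funpow_in[OF assms(1) assms(3)]] .
  finally show ?case .
qed

lemma funpow_cont: "continuous_on X f \<Longrightarrow> (\<And>x. x \<in> X \<Longrightarrow> f x \<in> X) \<Longrightarrow> continuous_on X (f ^^ k)"
proof (induction k)
  case 0 then show ?case by (simp add: continuous_on_id)
next
  case (Suc k)
  have "continuous_on X (f \<circ> (f ^^ k))"
    proof (rule continuous_on_compose)
      show "continuous_on X (f ^^ k)" using Suc by blast
      have "(f ^^ k) ` X \<subseteq> X" by (rule image_subsetI, rule funpow_in, rule Suc.prems(2))
      then show "continuous_on ((f ^^ k) ` X) f" using Suc.prems continuous_on_subset by blast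
    qed
  then show ?case by simp
qed

locale smale =
  fixes X :: "'a::metric_space set" and phi psi :: "'a \<Rightarrow> 'a" and br :: "'a \<Rightarrow> 'a \<Rightarrow> 'a"
    and eps lam :: real
  assumes compactX: "compact X" and infX: "infinite X" and homeo: "homeomorphism X X phi psi"
    and eps_pos: "eps > 0" and lam_pos: "0 < lam" and lam_lt1: "lam < 1"
    and br_in: "\<And>x y. x\<in>X \<Longrightarrow> y\<in>X \<Longrightarrow> dist x y \<le> eps \<Longrightarrow> br x y \<in> X"
    and br_cont: "continuous_on {(x, y). x \<in> X \<and> y \<in> X \<and> dist x y \<le> eps} (\<lambda>(x, y). br x y)"
    and br_refl: "\<And>x. x\<in>X \<Longrightarrow> br x x = x"
    and B2: "\<And>x y z. x\<in>X \<Longrightarrow> y\<in>X \<Longrightarrow> z\<in>X \<Longrightarrow>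
        dist y z \<le> eps \<and> dist x (br y z) \<le> eps \<and> dist x z \<le> eps
        \<Longrightarrow> br x (br y z) = br x z"
    and B3: "\<And>x y z. x\<in>X \<Longrightarrow> y\<in>X \<Longrightarrow> z\<in>X \<Longrightarrow>
        dist x y \<le> eps \<and> dist (br x y) z \<le> eps \<and> dist x z \<le> eps
        \<Longrightarrow> br (br x y) z = br x z"
    and equiv: "\<And>x y. x\<in>X \<Longrightarrow> y\<in>X \<Longrightarrow>
        dist x y \<le> eps \<and> dist (phi x) (phi y) \<le> eps
        \<Longrightarrow> phi (br x y) = br (phi x) (phi y)"
    and contrS: "\<And>x y. x\<in>X \<Longrightarrow> y\<in>X \<Longrightarrow> dist x y \<le> eps \<and> br x y = y
        \<Longrightarrow> dist (phi x) (phi y) \<le> lam * dist x y"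
    and contrU: "\<And>x y. x\<in>X \<Longrightarrow> y\<in>X \<Longrightarrow> dist x y \<le> eps \<and> br x y = x
        \<Longrightarrow> dist (psi x) (psi y) \<le> lam * dist x y"
begin

lemma phiX: "x \<in> X \<Longrightarrow> phi x \<in> X" and psiX: "x \<in> X \<Longrightarrow> psi x \<in> X"
  and psi_phi: "x \<in> X \<Longrightarrow> psi (phi x) = x" and phi_psi: "x \<in> X \<Longrightarrow> phi (psi x) = x"
  and phi_cont: "continuous_on X phi" and psi_cont: "continuous_on X psi"
  using homeo unfolding homeomorphism_def by auto

lemma phinX: "x \<in> X \<Longrightarrow> (phi ^^ k) x \<in> X" and psinX: "x \<in> X \<Longrightarrow> (psi ^^ k) x \<in> X"
  by (rule funpow_in, rule phiX, assumption+) (rule funpow_in, rule psiX, assumption+)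

lemma UC:
  assumes "e > 0"
  shows "\<exists>\<eta>>0. \<eta> \<le> eps \<and> (\<forall>x\<in>X. \<forall>y\<in>X. dist x y \<le> \<eta> \<longrightarrow> dist (br x y) x \<le> e \<and> dist (br x y) y \<le> e)"
proof -
  define D where "D = {(x, y). x \<in> X \<and> y \<in> X \<and> dist x y \<le> eps}"
  have "D = (X \<times> X) \<inter> {p. dist (fst p) (snd p) \<le> eps}" unfolding D_def by auto
  moreover have "closed {p. dist (fst p) (snd p) \<le> eps}"
    by (intro closed_Collect_le continuous_intros)
  ultimately have cD: "compact D" using compactX
    by (metis compact_Int_closed compact_Times)
  define f where "f = (\<lambda>p. br (fst p) (snd p))"
  have "continuous_on D (\<lambda>(x, y). br x y)" using br_cont unfolding D_def by blast
  moreover have "(\<lambda>(x, y). br x y) = f" unfolding f_def by (simp add: fun_eq_iff)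
  ultimately have "continuous_on D f" by simp
  then have uc: "uniformly_continuous_on D f" using cD compact_uniformly_continuous by blast
  obtain d where d: "d > 0" and hd: "\<And>p p'. p\<in>D \<Longrightarrow> p'\<in>D \<Longrightarrow> dist p' p < d \<Longrightarrow> dist (f p') (f p) < e"
    using uc[unfolded uniformly_continuous_on_def, rule_format, OF assms] by blast
  have "min (d/2) eps > 0" using d eps_pos by simp
  moreover have "\<forall>x\<in>X. \<forall>y\<in>X. dist x y \<le> min (d/2) eps \<longrightarrow> dist (br x y) x \<le> e \<and> dist (br x y) y \<le> e"
  proof (intro ballI impI)
    fix x y assume xy: "x \<in> X" "y \<in> X" "dist x y \<le> min (d / 2) eps"
    have D1: "(x, y) \<in> D" "(x, x) \<in> D" "(y, y) \<in> D" using xy eps_pos unfolding D_def by auto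
    have "dist (x, y) (x, x) < d" using xy d by (simp add: dist_Pair_Pair dist_commute)
    then have "dist (f (x, y)) (f (x, x)) < e"
      using hd D1 by blast
    then have 1: "dist (br x y) x < e" using br_refl xy by (simp add: f_def)
    have "dist (x, y) (y, y) < d" using xy d by (simp add: dist_Pair_Pair dist_commute)
    then have "dist (f (x, y)) (f (y, y)) < e"
      using hd D1 by blast
    then have 2: "dist (br x y) y < e" using br_refl xy by (simp add: f_def)
    show "dist (br x y) x \<le> e \<and> dist (br x y) y \<le> e" using 1 2 by simp
  qed
  moreover have "min (d/2) eps \<le> eps" by simp
  ultimately show ?thesis by blast
qed

end

lemma smaleI: "smale_space X phi psi br eps lam \<Longrightarrow> smale X phi psi br eps lam"
  unfolding smale_space_def smale_def
  apply (elim conjE)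
  apply (intro conjI allI impI)
  apply (assumption | simp only: Ball_def)+
  done




context smale
begin

lemma psi_equiv:
  assumes "a \<in> X" "b \<in> X" "dist a b \<le> eps" "dist (psi a) (psi b) \<le> eps"
  shows "psi (br a b) = br (psi a) (psi b)"
proof -
  have "phi (br (psi a) (psi b)) = br (phi (psi a)) (phi (psi b))"
    using equiv[of "psi a" "psi b"] assms psiX phi_psi by simp
  also have "\<dots> = br a b" using assms phi_psi by simp
  finally have "psi (phi (br (psi a) (psi b))) = psi (br a b)" by simp
  moreover have "br (psi a) (psi b) \<in> X" using br_in assms psiX by simp
  ultimately show ?thesis using psi_phi by simp
qed

lemma stable_iter:
  assumes "a \<in> X" "b \<in> X" "dist a b \<le> eps" "br a b = b"
  shows "dist ((phi ^^ k) a) ((phi ^^ k) b) \<le> lam ^ k * dist a b \<and> br ((phi ^^ k) a) ((phi ^^ k) b) = (phi ^^ k) b"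
proof (induction k)
  case 0 then show ?case using assms by simp
next
  case (Suc k)
  define a' where "a' = (phi ^^ k) a"
  define b' where "b' = (phi ^^ k) b"
  have X: "a' \<in> X" "b' \<in> X" unfolding a'_def b'_def using assms phinX by auto
  have "lam ^ k \<le> 1" using lam_pos lam_lt1 by (simp add: power_le_one)
  then have "lam ^ k * dist a b \<le> dist a b" using mult_right_mono[OF _ zero_le_dist, of "lam^k" 1 a b] by simp
  then have d1: "dist a' b' \<le> eps" using Suc assms unfolding a'_def b'_def by linarith
  have r: "br a' b' = b'" using Suc unfolding a'_def b'_def by simp
  have c: "dist (phi a') (phi b') \<le> lam * dist a' b'" using contrS[of a' b'] X d1 r by simp
  also have "\<dots> \<le> lam * (lam ^ k * dist a b)" using Suc lam_pos unfolding a'_def b'_def by simp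
  finally have c2: "dist (phi a') (phi b') \<le> lam ^ Suc k * dist a b" by simp
  have "lam * dist a' b' \<le> dist a' b'" using mult_right_mono[OF _ zero_le_dist, of lam 1 a' b'] lam_lt1 by simp
  then have "dist (phi a') (phi b') \<le> eps" using c d1 by linarith
  then have "phi (br a' b') = br (phi a') (phi b')" using equiv[of a' b'] X d1 by simp
  then have "br (phi a') (phi b') = phi b'" using r by simp
  then show ?case using c2 unfolding a'_def b'_def by simp
qed

lemma unstable_iter:
  assumes "a \<in> X" "b \<in> X" "dist a b \<le> eps" "br a b = a"
  shows "dist ((psi ^^ k) a) ((psi ^^ k) b) \<le> lam ^ k * dist a b \<and> br ((psi ^^ k) a) ((psi ^^ k) b) = (psi ^^ k) a"
proof (induction k)
  case 0 then show ?case using assms by simp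
next
  case (Suc k)
  define a' where "a' = (psi ^^ k) a"
  define b' where "b' = (psi ^^ k) b"
  have X: "a' \<in> X" "b' \<in> X" unfolding a'_def b'_def using assms psinX by auto
  have "lam ^ k \<le> 1" using lam_pos lam_lt1 by (simp add: power_le_one)
  then have "lam ^ k * dist a b \<le> dist a b" using mult_right_mono[OF _ zero_le_dist, of "lam^k" 1 a b] by simp
  then have d1: "dist a' b' \<le> eps" using Suc assms unfolding a'_def b'_def by linarith
  have r: "br a' b' = a'" using Suc unfolding a'_def b'_def by simp
  have c: "dist (psi a') (psi b') \<le> lam * dist a' b'" using contrU[of a' b'] X d1 r by simp
  also have "\<dots> \<le> lam * (lam ^ k * dist a b)" using Suc lam_pos unfolding a'_def b'_def by simp
  finally have c2: "dist (psi a') (psi b') \<le> lam ^ Suc k * dist a b" by simp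
  have "lam * dist a' b' \<le> dist a' b'" using mult_right_mono[OF _ zero_le_dist, of lam 1 a' b'] lam_lt1 by simp
  then have "dist (psi a') (psi b') \<le> eps" using c d1 by linarith
  then have "psi (br a' b') = br (psi a') (psi b')" using psi_equiv[of a' b'] X d1 by simp
  then have "br (psi a') (psi b') = psi a'" using r by simp
  then show ?case using c2 unfolding a'_def b'_def by simp
qed

lemma small_zero:
  assumes "d \<ge> 0" "\<And>k. d \<le> lam ^ k * eps" shows "d = 0"
proof (rule ccontr)
  assume "d \<noteq> 0"
  then have "d / eps > 0" using assms eps_pos by simp
  then obtain n where "lam ^ n < d / eps" using real_arch_pow_inv lam_lt1 by blast
  then have "lam ^ n * eps < d" using eps_pos by (simp add: pos_less_divide_eq)
  then show False using assms(2)[of n] by simp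
qed

lemma phi_psi_n: "x \<in> X \<Longrightarrow> (phi ^^ k) ((psi ^^ k) x) = x"
  using funpow_cancel[of X psi phi x k k] psiX phi_psi by simp

lemma psi_phi_n: "x \<in> X \<Longrightarrow> (psi ^^ k) ((phi ^^ k) x) = x"
  using funpow_cancel[of X phi psi x k k] phiX psi_phi by simp

lemma expansive:
  "\<exists>c>0. c \<le> eps \<and> (\<forall>x\<in>X. \<forall>x'\<in>X. (\<forall>k. dist ((phi ^^ k) x) ((phi ^^ k) x') \<le> c \<and>
        dist ((psi ^^ k) x) ((psi ^^ k) x') \<le> c) \<longrightarrow> x = x')"
proof -
  obtain c where c: "c > 0" "c \<le> eps" and
    hc: "\<And>x y. x\<in>X \<Longrightarrow> y\<in>X \<Longrightarrow> dist x y \<le> c \<Longrightarrow> dist (br x y) x \<le> eps \<and> dist (br x y) y \<le> eps"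
    using UC[OF eps_pos] by blast
  have "\<forall>x\<in>X. \<forall>x'\<in>X. (\<forall>k. dist ((phi ^^ k) x) ((phi ^^ k) x') \<le> c \<and>
        dist ((psi ^^ k) x) ((psi ^^ k) x') \<le> c) \<longrightarrow> x = x'"
  proof (intro ballI impI)
    fix x x' assume xX: "x \<in> X" and x'X: "x' \<in> X"
      and H: "\<forall>k. dist ((phi ^^ k) x) ((phi ^^ k) x') \<le> c \<and> dist ((psi ^^ k) x) ((psi ^^ k) x') \<le> c"
    define z where "z = br x x'"
    have zphi: "(phi ^^ k) z = br ((phi ^^ k) x) ((phi ^^ k) x')" for k
    proof (induction k)
      case 0 then show ?case unfolding z_def by simp
    next
      case (Suc k)
      have "(phi ^^ Suc k) z = phi (br ((phi ^^ k) x) ((phi ^^ k) x'))" using Suc by simp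
      also have "\<dots> = br (phi ((phi ^^ k) x)) (phi ((phi ^^ k) x'))"
        using equiv[of "(phi ^^ k) x" "(phi ^^ k) x'"] phinX xX x'X H[rule_format, of k] H[rule_format, of "Suc k"] c
        by simp
      finally show ?case by simp
    qed
    have zpsi: "(psi ^^ k) z = br ((psi ^^ k) x) ((psi ^^ k) x')" for k
    proof (induction k)
      case 0 then show ?case unfolding z_def by simp
    next
      case (Suc k)
      have "(psi ^^ Suc k) z = psi (br ((psi ^^ k) x) ((psi ^^ k) x'))" using Suc by simp
      also have "\<dots> = br (psi ((psi ^^ k) x)) (psi ((psi ^^ k) x'))"
        using psi_equiv[of "(psi ^^ k) x" "(psi ^^ k) x'"] psinX xX x'X H[rule_format, of k] H[rule_format, of "Suc k"] c
        by simp
      finally show ?case by simp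
    qed
    have zX: "z \<in> X" unfolding z_def using br_in xX x'X H[rule_format, of 0] c by simp
    have 1: "dist x z \<le> lam ^ k * eps" for k
    proof -
      define a where "a = (psi ^^ k) x"
      define a' where "a' = (psi ^^ k) x'"
      have aX: "a \<in> X" "a' \<in> X" unfolding a_def a'_def using psinX xX x'X by auto
      have daa: "dist a a' \<le> c" unfolding a_def a'_def using H by simp
      have b: "(psi ^^ k) z = br a a'" unfolding a_def a'_def using zpsi .
      have hb: "dist (br a a') a \<le> eps" "dist (br a a') a' \<le> eps" using hc aX daa by auto
      have rel: "br a (br a a') = br a a'"
        using B2[of a a a'] aX daa c hb by (simp add: dist_commute)
      have bX: "br a a' \<in> X" using br_in aX daa c by simp
      have "dist ((phi ^^ k) a) ((phi ^^ k) (br a a')) \<le> lam ^ k * dist a (br a a')"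
        using stable_iter[of a "br a a'" k] aX bX hb rel by (simp add: dist_commute)
      also have "\<dots> \<le> lam ^ k * eps" using hb lam_pos by (simp add: dist_commute mult_left_mono)
      moreover have "(phi ^^ k) (br a a') = z" using b phi_psi_n[OF zX, where k=k] by metis
      moreover have "(phi ^^ k) a = x" unfolding a_def using phi_psi_n[OF xX, where k=k] .
      ultimately show ?thesis by simp
    qed
    have 2: "dist z x' \<le> lam ^ k * eps" for k
    proof -
      define a where "a = (phi ^^ k) x"
      define a' where "a' = (phi ^^ k) x'"
      have aX: "a \<in> X" "a' \<in> X" unfolding a_def a'_def using phinX xX x'X by auto
      have daa: "dist a a' \<le> c" unfolding a_def a'_def using H by simp
      have b: "(phi ^^ k) z = br a a'" unfolding a_def a'_def using zphi .
      have hb: "dist (br a a') a \<le> eps" "dist (br a a') a' \<le> eps" using hc aX daa by auto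
      have rel: "br (br a a') a' = br a a'"
        using B3[of a a' a'] aX daa c hb by simp
      have bX: "br a a' \<in> X" using br_in aX daa c by simp
      have "dist ((psi ^^ k) (br a a')) ((psi ^^ k) a') \<le> lam ^ k * dist (br a a') a'"
        using unstable_iter[of "br a a'" a' k] aX bX hb rel by simp
      also have "\<dots> \<le> lam ^ k * eps" using hb lam_pos by (simp add: mult_left_mono)
      moreover have "(psi ^^ k) (br a a') = z" using b psi_phi_n[OF zX, where k=k] by metis
      moreover have "(psi ^^ k) a' = x'" unfolding a'_def using psi_phi_n[OF x'X, where k=k] .
      ultimately show ?thesis by simp
    qed
    have "dist x z = 0" by (rule small_zero) (use 1 in auto)
    moreover have "dist z x' = 0" by (rule small_zero) (use 2 in auto)
    ultimately show "x = x'" by simp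
  qed
  then show ?thesis using c by blast
qed

end



context smale
begin

lemma fix_mult: "p \<in> X \<Longrightarrow> (phi ^^ N) p = p \<Longrightarrow> (phi ^^ (N * a)) p = p"
proof (induction a)
  case 0 then show ?case by simp
next
  case (Suc a)
  have "(phi ^^ (N * Suc a)) p = (phi ^^ N) ((phi ^^ (N * a)) p)"
    by (simp add: funpow_add)
  then show ?case using Suc by simp
qed

lemma fix_mod: "p \<in> X \<Longrightarrow> (phi ^^ N) p = p \<Longrightarrow> (phi ^^ k) p = (phi ^^ (k mod N)) p"
proof -
  assume a: "p \<in> X" "(phi ^^ N) p = p"
  have "k = k mod N + N * (k div N)" by simp
  then have "(phi ^^ k) p = (phi ^^ (k mod N)) ((phi ^^ (N * (k div N))) p)"
    by (metis comp_apply funpow_add)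
  then show ?thesis using fix_mult[OF a] by simp
qed

lemma fix_psi: "p \<in> X \<Longrightarrow> (phi ^^ N) p = p \<Longrightarrow> N \<ge> 1 \<Longrightarrow> (psi ^^ k) p = (phi ^^ ((N * k - k) mod N)) p"
proof -
  assume a: "p \<in> X" "(phi ^^ N) p = p" "N \<ge> 1"
  have "(psi ^^ k) p = (psi ^^ k) ((phi ^^ (N * k)) p)" using fix_mult[OF a(1,2)] by simp
  also have "\<dots> = (phi ^^ (N * k - k)) p"
    using funpow_cancel[of X phi psi p k "N * k"] phiX psi_phi a by simp
  also have "\<dots> = (phi ^^ ((N * k - k) mod N)) p" using fix_mod[OF a(1,2)] .
  finally show ?thesis .
qed

lemma ucN: "e > 0 \<Longrightarrow> \<exists>\<delta>>0. \<forall>p\<in>X. \<forall>q\<in>X. dist p q < \<delta> \<longrightarrow> (\<forall>i<N. dist ((phi ^^ i) p) ((phi ^^ i) q) < e)"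
proof (induction N)
  case 0 then show ?case by (intro exI[of _ 1]) simp
next
  case (Suc N)
  then obtain d1 where d1: "d1 > 0" "\<forall>p\<in>X. \<forall>q\<in>X. dist p q < d1 \<longrightarrow> (\<forall>i<N. dist ((phi ^^ i) p) ((phi ^^ i) q) < e)"
    by blast
  have "uniformly_continuous_on X (phi ^^ N)"
    by (rule compact_uniformly_continuous[OF funpow_cont[OF phi_cont] compactX]) (rule phiX)
  then obtain d2 where d2: "d2 > 0" "\<And>x x'. x\<in>X \<Longrightarrow> x'\<in>X \<Longrightarrow> dist x' x < d2 \<Longrightarrow> dist ((phi ^^ N) x') ((phi ^^ N) x) < e"
    unfolding uniformly_continuous_on_def using Suc.prems by metis
  show ?case
  proof (intro exI[of _ "min d1 d2"] conjI ballI impI allI)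
    show "min d1 d2 > 0" using d1 d2 by simp
    fix p q i assume pq: "p \<in> X" "q \<in> X" "dist p q < min d1 d2" and i: "i < Suc N"
    show "dist ((phi ^^ i) p) ((phi ^^ i) q) < e"
    proof (cases "i < N")
      case True then show ?thesis using d1 pq by simp
    next
      case False
      then have "i = N" using i by simp
      then show ?thesis using d2(2)[of q p] pq by (simp add: dist_commute)
    qed
  qed
qed

lemma fix_finite: assumes N: "N \<ge> 1" shows "finite {x\<in>X. (phi ^^ N) x = x}"
proof (rule ccontr)
  define F where "F = {x\<in>X. (phi ^^ N) x = x}"
  assume "infinite {x\<in>X. (phi ^^ N) x = x}"
  then have inf: "infinite F" unfolding F_def .
  obtain c where c: "c > 0" "c \<le> eps" and hc: "\<forall>x\<in>X. \<forall>x'\<in>X. (\<forall>k. dist ((phi ^^ k) x) ((phi ^^ k) x') \<le> c \<and>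
        dist ((psi ^^ k) x) ((psi ^^ k) x') \<le> c) \<longrightarrow> x = x'"
    using expansive by blast
  obtain \<delta> where \<delta>: "\<delta> > 0" "\<forall>p\<in>X. \<forall>q\<in>X. dist p q < \<delta> \<longrightarrow> (\<forall>i<N. dist ((phi ^^ i) p) ((phi ^^ i) q) < c)"
    using ucN[OF c(1)] by blast
  have "F \<subseteq> X" unfolding F_def by auto
  then obtain x where "x \<in> X" "x islimpt F"
    using compactX inf unfolding compact_eq_Bolzano_Weierstrass by blast
  then have lim: "\<And>e. e > 0 \<Longrightarrow> \<exists>x'\<in>F. x' \<noteq> x \<and> dist x' x < e" unfolding islimpt_approachable by blast
  obtain p where p: "p \<in> F" "p \<noteq> x" "dist p x < \<delta>/2" using lim[of "\<delta>/2"] \<delta> by auto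
  have "dist p x > 0" using p by simp
  then obtain q where q: "q \<in> F" "q \<noteq> x" "dist q x < min (\<delta>/2) (dist p x)"
    using lim[of "min (\<delta>/2) (dist p x)"] \<delta> by auto
  have qp: "q \<noteq> p" using q by auto
  have "dist p q \<le> dist p x + dist q x" using dist_triangle[of p q x] by (simp add: dist_commute)
  then have dpq: "dist p q < \<delta>" using p q by simp
  have pX: "p \<in> X" "(phi ^^ N) p = p" and qX: "q \<in> X" "(phi ^^ N) q = q" using p q unfolding F_def by auto
  have small: "dist ((phi ^^ i) p) ((phi ^^ i) q) < c" if "i < N" for i
    using \<delta>(2) pX qX dpq that by blast
  have "N > 0" using N by simp
  have "\<forall>k. dist ((phi ^^ k) p) ((phi ^^ k) q) \<le> c \<and> dist ((psi ^^ k) p) ((psi ^^ k) q) \<le> c"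
  proof
    fix k
    have "dist ((phi ^^ k) p) ((phi ^^ k) q) < c"
      using small[of "k mod N"] fix_mod[OF pX, of k] fix_mod[OF qX, of k] \<open>N > 0\<close> by simp
    moreover have "dist ((psi ^^ k) p) ((psi ^^ k) q) < c"
      using small[of "(N * k - k) mod N"] fix_psi[OF pX N, of k] fix_psi[OF qX N, of k] \<open>N > 0\<close> by simp
    ultimately show "dist ((phi ^^ k) p) ((phi ^^ k) q) \<le> c \<and> dist ((psi ^^ k) p) ((psi ^^ k) q) \<le> c"
      by simp
  qed
  then have "p = q" using hc pX qX by blast
  then show False using qp by simp
qed

end



lemma contc: "continuous_on X f \<Longrightarrow> continuous_on X g \<Longrightarrow> (\<And>x. x \<in> X \<Longrightarrow> g x \<in> X) \<Longrightarrow> continuous_on X (\<lambda>x. f (g x))"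
proof -
  assume a: "continuous_on X f" "continuous_on X g" "\<And>x. x \<in> X \<Longrightarrow> g x \<in> X"
  have "continuous_on X (f \<circ> g)"
  proof (rule continuous_on_compose)
    show "continuous_on X g" by (rule a(2))
    have "g ` X \<subseteq> X" using a(3) by blast
    then show "continuous_on (g ` X) f" using a(1) continuous_on_subset by blast
  qed
  then show ?thesis by (simp add: comp_def)
qed

lemma lim_bound:
  fixes f g :: "'a::metric_space \<Rightarrow> 'a"
  assumes "continuous_on X f" "continuous_on X g" "s \<longlonglongrightarrow> l" "l \<in> X" "\<And>n. s n \<in> X"
    "\<And>n. n \<ge> M \<Longrightarrow> dist (f (s n)) (g (s n)) \<le> c"
  shows "dist (f l) (g l) \<le> c"
proof -
  have ev: "\<forall>\<^sub>F n in sequentially. s n \<in> X" using assms(5) by simp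
  have "(\<lambda>n. f (s n)) \<longlonglongrightarrow> f l" by (rule continuous_on_tendsto_compose[OF assms(1) assms(3) assms(4) ev])
  moreover have "(\<lambda>n. g (s n)) \<longlonglongrightarrow> g l" by (rule continuous_on_tendsto_compose[OF assms(2) assms(3) assms(4) ev])
  ultimately have "(\<lambda>n. dist (f (s n)) (g (s n))) \<longlonglongrightarrow> dist (f l) (g l)" by (rule tendsto_dist)
  then show ?thesis by (rule LIMSEQ_le_const2) (use assms(6) in blast)
qed

context smale
begin

lemma periodic_exists:
  assumes mix: "mixing X phi"
  shows "\<exists>R\<in>X. \<exists>N\<ge>1. (phi ^^ N) R = R"
proof -
  obtain c where c: "c > 0" "c \<le> eps" and hc: "\<forall>x\<in>X. \<forall>x'\<in>X. (\<forall>k. dist ((phi ^^ k) x) ((phi ^^ k) x') \<le> c \<and>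
        dist ((psi ^^ k) x) ((psi ^^ k) x') \<le> c) \<longrightarrow> x = x'"
    using expansive by blast
  define \<gamma> where "\<gamma> = c / 6"
  have g0: "\<gamma> > 0" and g2: "2 * \<gamma> \<le> eps" and g6: "6 * \<gamma> = c" using c unfolding \<gamma>_def by auto
  have g1: "\<gamma> \<le> eps" using g0 g2 by simp
  obtain \<eta> where \<eta>: "\<eta> > 0" "\<eta> \<le> eps" and
    h\<eta>: "\<And>x y. x\<in>X \<Longrightarrow> y\<in>X \<Longrightarrow> dist x y \<le> \<eta> \<Longrightarrow> dist (br x y) x \<le> \<gamma> \<and> dist (br x y) y \<le> \<gamma>"
    using UC[OF g0] by blast
  have "min (1/2) (\<eta> / (4 * \<gamma>)) > 0" using \<eta> g0 by simp
  then obtain K where K: "lam ^ K < min (1/2) (\<eta> / (4 * \<gamma>))"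
    using real_arch_pow_inv lam_lt1 by blast
  obtain y0 where y0: "y0 \<in> X" using infX by fastforce
  define U where "U = X \<inter> ball y0 (\<eta> / 4)"
  have Uo: "openin (top_of_set X) U" unfolding U_def by (simp add: openin_open_Int)
  have Une: "U \<noteq> {}" using y0 \<eta> unfolding U_def by auto
  obtain N0 where hN0: "\<forall>n\<ge>N0. (phi ^^ n) ` U \<inter> U \<noteq> {}"
    using mix Uo Une unfolding mixing_def by blast
  define N where "N = max N0 (max K 1)"
  have N1: "N \<ge> 1" and NK: "K \<le> N" unfolding N_def by auto
  have "(phi ^^ N) ` U \<inter> U \<noteq> {}" using hN0 unfolding N_def by simp
  then obtain y where yU: "y \<in> U" and tyU: "(phi ^^ N) y \<in> U" by blast
  have lamN: "lam ^ N \<le> lam ^ K" using power_decreasing[OF NK, of lam] lam_pos lam_lt1 by simp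
  have lamN2: "lam ^ N < 1/2" using lamN K by simp
  have "lam ^ K < \<eta> / (4 * \<gamma>)" using K by simp
  then have "lam ^ K * \<gamma> < \<eta> / 4" using g0 by (simp add: pos_less_divide_eq field_simps)
  then have lamN3: "lam ^ N * \<gamma> < \<eta> / 4" using lamN g0 by (meson le_less_trans mult_right_mono less_imp_le)
  have lampow1: "lam ^ t \<le> 1" for t using lam_pos lam_lt1 by (simp add: power_le_one)
  define ty where "ty = (phi ^^ N) y"
  have yX: "y \<in> X" and tyX: "ty \<in> X" using yU tyU unfolding U_def ty_def by auto
  have "dist y y0 < \<eta> / 4" "dist ty y0 < \<eta> / 4" using yU tyU unfolding U_def ty_def by (auto simp: dist_commute)
  then have dyty: "dist y ty \<le> \<eta> / 2" using dist_triangle[of y ty y0] by (simp add: dist_commute)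
  define u where "u = rec_nat y (\<lambda>_ v. (psi ^^ N) (br v ty))"
  have u0: "u 0 = y" and uS: "u (Suc j) = (psi ^^ N) (br (u j) ty)" for j unfolding u_def by simp_all
  have psity: "(psi ^^ N) ty = y" unfolding ty_def using psi_phi_n[OF yX] .
  have A: "u j \<in> X \<and> dist (u j) y \<le> \<eta> / 4 \<and> (\<forall>t\<le>N. dist ((phi ^^ t) (u j)) ((phi ^^ t) y) \<le> \<gamma>)" for j
  proof (induction j)
    case 0 then show ?case using u0 yX \<eta> g0 by simp
  next
    case (Suc j)
    define e where "e = br (u j) ty"
    have ujX: "u j \<in> X" using Suc by simp
    have "dist (u j) ty \<le> dist (u j) y + dist y ty" by (rule dist_triangle)
    moreover have "dist (u j) y \<le> \<eta> / 4" using Suc by simp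
    ultimately have dut: "dist (u j) ty \<le> \<eta>" using dyty \<eta> by linarith
    have hb: "dist e (u j) \<le> \<gamma>" "dist e ty \<le> \<gamma>" using h\<eta>[OF ujX tyX dut] unfolding e_def by auto
    have eX: "e \<in> X" unfolding e_def using br_in ujX tyX dut \<eta> by simp
    have rel: "br e ty = e" unfolding e_def using B3[of "u j" ty ty] ujX tyX dut  \<eta> hb g1 g2 unfolding e_def by simp
    have ui: "dist ((psi ^^ k) e) ((psi ^^ k) ty) \<le> lam ^ k * \<gamma>" for k
    proof -
      have "dist ((psi ^^ k) e) ((psi ^^ k) ty) \<le> lam ^ k * dist e ty"
        using unstable_iter[of e ty k] eX tyX hb g1 g2 rel by simp
      also have "\<dots> \<le> lam ^ k * \<gamma>" using hb lam_pos by (simp add: mult_left_mono)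
      finally show ?thesis .
    qed
    have uSX: "u (Suc j) \<in> X" using uS psinX eX unfolding e_def by simp
    have "dist (u (Suc j)) y \<le> lam ^ N * \<gamma>" using ui[of N] uS psity unfolding e_def by simp
    then have d1: "dist (u (Suc j)) y \<le> \<eta> / 4" using lamN3 by simp
    have d2: "dist ((phi ^^ t) (u (Suc j))) ((phi ^^ t) y) \<le> \<gamma>" if t: "t \<le> N" for t
    proof -
      have "(phi ^^ t) (u (Suc j)) = (psi ^^ (N - t)) e"
        using uS funpow_cancel[of X psi phi e t N] psiX phi_psi eX t unfolding e_def by simp
      moreover have "(psi ^^ (N - t)) ty = (phi ^^ t) y"
        using funpow_cancel[of X phi psi y "N - t" N] phiX psi_phi yX t unfolding ty_def by simp
      moreover have "lam ^ (N - t) * \<gamma> \<le> \<gamma>" using lampow1[of "N - t"] g0 by (simp add: mult_left_le_one_le)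
      ultimately show ?thesis using ui[of "N - t"] by simp
    qed
    show ?case using uSX d1 d2 by simp
  qed
  define e where "e j = br (u j) ty" for j
  have B: "e j \<in> X \<and> dist (u j) (e j) \<le> \<gamma> \<and> br (u j) (e j) = e j \<and> (phi ^^ N) (u (Suc j)) = e j" for j
  proof -
    have ujX: "u j \<in> X" using A by simp
    have "dist (u j) ty \<le> dist (u j) y + dist y ty" by (rule dist_triangle)
    moreover have "dist (u j) y \<le> \<eta> / 4" using A[of j] by simp
    ultimately have dut: "dist (u j) ty \<le> \<eta>" using dyty \<eta> by linarith
    have hb: "dist (e j) (u j) \<le> \<gamma>" "dist (e j) ty \<le> \<gamma>" using h\<eta>[OF ujX tyX dut] unfolding e_def by auto
    have eX: "e j \<in> X" unfolding e_def using br_in ujX tyX dut \<eta> by simp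
    have rel: "br (u j) (e j) = e j" unfolding e_def
      using B2[of "u j" "u j" ty] ujX tyX dut  \<eta> hb g1 g2 unfolding e_def by (simp add: dist_commute)
    have "(phi ^^ N) (u (Suc j)) = e j" using uS phi_psi_n[OF eX, where k=N] unfolding e_def by simp
    then show ?thesis using eX hb rel by (simp add: dist_commute)
  qed
  have C: "(phi ^^ (j * N)) (u m) \<in> X \<and> br (u (m - j)) ((phi ^^ (j * N)) (u m)) = (phi ^^ (j * N)) (u m)
     \<and> dist (u (m - j)) ((phi ^^ (j * N)) (u m)) \<le> 2 * \<gamma>" if "j \<le> m" for j m
    using that
  proof (induction j)
    case 0 then show ?case using A[of m] br_refl g0 by simp
  next
    case (Suc j)
    define a where "a = u (m - j)"
    define b where "b = (phi ^^ (j * N)) (u m)"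
    have IH: "b \<in> X" "br a b = b" "dist a b \<le> 2 * \<gamma>" using Suc unfolding a_def b_def by auto
    have aX: "a \<in> X" unfolding a_def using A by simp
    have si: "dist ((phi ^^ N) a) ((phi ^^ N) b) \<le> lam ^ N * dist a b \<and> br ((phi ^^ N) a) ((phi ^^ N) b) = (phi ^^ N) b"
      using stable_iter[of a b N] aX IH g1 g2 by simp
    have "lam ^ N * dist a b \<le> lam ^ N * (2 * \<gamma>)" using IH lam_pos by (simp add: mult_left_mono)
    also have "\<dots> \<le> \<gamma>" using lamN2 g0 by simp
    finally have s1: "dist ((phi ^^ N) a) ((phi ^^ N) b) \<le> \<gamma>" using si by linarith
    have mj: "m - j = Suc (m - Suc j)" using Suc.prems by simp
    define u' where "u' = u (m - Suc j)"
    define e' where "e' = e (m - Suc j)"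
    define Tb where "Tb = (phi ^^ N) b"
    have Ta: "(phi ^^ N) a = e'" unfolding a_def e'_def using B[of "m - Suc j"] mj by simp
    have u'X: "u' \<in> X" unfolding u'_def using A by simp
    have e'X: "e' \<in> X" and due: "dist u' e' \<le> \<gamma>" and r1: "br u' e' = e'"
      unfolding u'_def e'_def using B by auto
    have TbX: "Tb \<in> X" unfolding Tb_def using phinX IH by simp
    have r2: "br e' Tb = Tb" and det: "dist e' Tb \<le> \<gamma>" using si s1 Ta unfolding Tb_def by auto
    have "dist u' Tb \<le> dist u' e' + dist e' Tb" by (rule dist_triangle)
    then have dut: "dist u' Tb \<le> 2 * \<gamma>" using due det by simp
    have "br (br u' e') Tb = br u' Tb" using B3[of u' e' Tb] u'X e'X TbX due det dut g1 g2 r1 by simp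
    then have r3: "br u' Tb = Tb" using r1 r2 by simp
    have "Tb = (phi ^^ (Suc j * N)) (u m)" unfolding Tb_def b_def by (simp add: funpow_add)
    then show ?case using TbX r3 dut unfolding u'_def by simp
  qed
  have D: "dist ((phi ^^ a) (u m)) ((phi ^^ (a mod N)) y) \<le> 3 * \<gamma>" if am: "a \<le> m * N" for a m
  proof -
    define j where "j = a div N"
    define t where "t = a mod N"
    have "j \<le> m * N div N" unfolding j_def using am by (rule div_le_mono)
    then have jm: "j \<le> m" using N1 by simp
    have tN: "t \<le> N" unfolding t_def using N1 by (simp add: less_imp_le)
    have "a = t + j * N" unfolding t_def j_def by simp
    then have pa: "(phi ^^ a) (u m) = (phi ^^ t) ((phi ^^ (j * N)) (u m))" by (metis comp_apply funpow_add)
    define a' where "a' = u (m - j)"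
    define b where "b = (phi ^^ (j * N)) (u m)"
    have Cj: "b \<in> X" "br a' b = b" "dist a' b \<le> 2 * \<gamma>" using C[OF jm] unfolding a'_def b_def by auto
    have a'X: "a' \<in> X" unfolding a'_def using A by simp
    have "dist ((phi ^^ t) a') ((phi ^^ t) b) \<le> lam ^ t * dist a' b"
      using stable_iter[of a' b t] a'X Cj g1 g2 by simp
    also have "\<dots> \<le> dist a' b" using mult_right_mono[OF lampow1[of t] zero_le_dist, of a' b] by simp
    finally have s1: "dist ((phi ^^ t) a') ((phi ^^ t) b) \<le> 2 * \<gamma>" using Cj by simp
    have s2: "dist ((phi ^^ t) a') ((phi ^^ t) y) \<le> \<gamma>" using A[of "m - j"] tN unfolding a'_def by simp
    have "dist ((phi ^^ t) b) ((phi ^^ t) y) \<le> dist ((phi ^^ t) a') ((phi ^^ t) b) + dist ((phi ^^ t) a') ((phi ^^ t) y)"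
      by (rule dist_triangle3)
    then show ?thesis using s1 s2 pa unfolding b_def t_def by simp
  qed
  have E: "dist ((phi ^^ a) (u m)) ((phi ^^ a') (u m)) \<le> c"
    if "a \<le> m * N" "a' \<le> m * N" "a mod N = a' mod N" for a a' m
  proof -
    have "dist ((phi ^^ a) (u m)) ((phi ^^ a') (u m)) \<le> dist ((phi ^^ a) (u m)) ((phi ^^ (a mod N)) y)
        + dist ((phi ^^ a') (u m)) ((phi ^^ (a mod N)) y)" by (rule dist_triangle2)
    then show ?thesis using D[OF that(1)] D[OF that(2)] that(3) g6 by simp
  qed
  define R where "R m = (phi ^^ (m * N)) (u (2 * m))" for m
  have RX: "R m \<in> X" for m unfolding R_def using phinX A by simp
  obtain l r where lX: "l \<in> X" and r: "strict_mono r" and lim: "(R \<circ> r) \<longlonglongrightarrow> l"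
    using compactX RX unfolding compact_def by metis
  define s where "s n = R (r n)" for n
  have slim: "s \<longlonglongrightarrow> l" using lim unfolding s_def comp_def by simp
  have sX: "s n \<in> X" for n unfolding s_def using RX by simp
  have big: "k + N \<le> r n * N" if "n \<ge> k + 1" for k n
  proof -
    have "n \<le> r n" using seq_suble[OF r] by simp
    then have "k + 1 \<le> r n" using that by simp
    then have "(k + 1) * N \<le> r n * N" by (rule mult_le_mono1)
    moreover have "k \<le> k * N" using N1 by simp
    moreover have "(k + 1) * N = k * N + N" by simp
    ultimately show ?thesis by linarith
  qed
  have H: "\<forall>k. dist ((phi ^^ k) l) ((phi ^^ k) ((phi ^^ N) l)) \<le> c \<and>
        dist ((psi ^^ k) l) ((psi ^^ k) ((phi ^^ N) l)) \<le> c"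
  proof
    fix k
    have c1: "continuous_on X (phi ^^ k)" by (rule funpow_cont[OF phi_cont phiX])
    have c2: "continuous_on X (\<lambda>x. (phi ^^ k) ((phi ^^ N) x))"
      by (rule contc[OF c1 funpow_cont[OF phi_cont phiX] phinX])
    have c3: "continuous_on X (psi ^^ k)" by (rule funpow_cont[OF psi_cont psiX])
    have c4: "continuous_on X (\<lambda>x. (psi ^^ k) ((phi ^^ N) x))"
      by (rule contc[OF c3 funpow_cont[OF phi_cont phiX] phinX])
    have "dist ((phi ^^ k) l) ((phi ^^ k) ((phi ^^ N) l)) \<le> c"
    proof (rule lim_bound[OF c1 c2 slim lX sX, of "k + 1"])
      fix n assume n: "k + 1 \<le> n"
      define m where "m = r n"
      have kN: "k + N \<le> m * N" using big[OF n] unfolding m_def .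
      have e1: "(phi ^^ k) (s n) = (phi ^^ (k + m * N)) (u (2 * m))"
        unfolding s_def R_def m_def by (simp add: funpow_add)
      have e2: "(phi ^^ k) ((phi ^^ N) (s n)) = (phi ^^ (k + N + m * N)) (u (2 * m))"
        unfolding s_def R_def m_def by (simp add: funpow_add)
      have "(k + N + m * N) mod N = (k + m * N) mod N" by (simp add: add.commute add.left_commute)
      moreover have "(2 * m) * N = m * N + m * N" by simp
      then have "k + m * N \<le> (2 * m) * N" "k + N + m * N \<le> (2 * m) * N" using kN by linarith+
      ultimately show "dist ((phi ^^ k) (s n)) ((phi ^^ k) ((phi ^^ N) (s n))) \<le> c"
        using E[of "k + m * N" "2 * m" "k + N + m * N"] e1 e2 by simp
    qed
    moreover have "dist ((psi ^^ k) l) ((psi ^^ k) ((phi ^^ N) l)) \<le> c"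
    proof (rule lim_bound[OF c3 c4 slim lX sX, of "k + 1"])
      fix n assume n: "k + 1 \<le> n"
      define m where "m = r n"
      have kN: "k + N \<le> m * N" using big[OF n] unfolding m_def .
      have uX: "u (2 * m) \<in> X" using A by simp
      have e1: "(psi ^^ k) (s n) = (phi ^^ (m * N - k)) (u (2 * m))"
        unfolding s_def R_def m_def[symmetric]
        using funpow_cancel[of X phi psi "u (2 * m)" k "m * N"] phiX psi_phi uX kN by simp
      have "(phi ^^ N) (s n) = (phi ^^ (N + m * N)) (u (2 * m))"
        unfolding s_def R_def m_def by (simp add: funpow_add)
      then have e2: "(psi ^^ k) ((phi ^^ N) (s n)) = (phi ^^ (N + m * N - k)) (u (2 * m))"
        using funpow_cancel[of X phi psi "u (2 * m)" k "N + m * N"] phiX psi_phi uX kN by simp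
      have eq: "N + m * N - k = N + (m * N - k)" using kN by simp
      have "(N + m * N - k) mod N = (m * N - k) mod N" unfolding eq by simp
      moreover have "(2 * m) * N = m * N + m * N" by simp
      then have "m * N - k \<le> (2 * m) * N" "N + m * N - k \<le> (2 * m) * N" using kN by linarith+
      ultimately show "dist ((psi ^^ k) (s n)) ((psi ^^ k) ((phi ^^ N) (s n))) \<le> c"
        using E[of "m * N - k" "2 * m" "N + m * N - k"] e1 e2 by simp
    qed
    ultimately show "dist ((phi ^^ k) l) ((phi ^^ k) ((phi ^^ N) l)) \<le> c \<and>
        dist ((psi ^^ k) l) ((psi ^^ k) ((phi ^^ N) l)) \<le> c" by simp
  qed
  have "l = (phi ^^ N) l" using hc lX phinX[OF lX] H by blast
  then show ?thesis using lX N1 by metis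
qed

end



theorem lemma3p5:
  fixes X :: "'a::metric_space set" and G :: "('g, 'b) monoid_scheme"
  assumes "smale_space X phi psi br eps lam"
    and "mixing X phi"
    and "group G"
    and "smale_action G X phi act"
    and "effective_action G X act"
  shows "\<exists>P. finite P \<and> P \<noteq> {} \<and> P \<subseteq> X \<and> (\<forall>p\<in>P. periodic_point phi p) \<and>
             phi ` P = P \<and> (\<forall>g\<in>carrier G. \<forall>p\<in>P. act g p \<in> P)"
proof -
  interpret smale X phi psi br eps lam using smaleI[OF assms(1)] .
  obtain R N where RX: "R \<in> X" and N1: "N \<ge> 1" and RN: "(phi ^^ N) R = R"
    using periodic_exists[OF assms(2)] by blast
  define P where "P = {x\<in>X. (phi ^^ N) x = x}"
  have ga: "group_action G X act" and comm: "\<And>g x. g \<in> carrier G \<Longrightarrow> x \<in> X \<Longrightarrow> act g (phi x) = phi (act g x)"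
    using assms(4) unfolding smale_action_def by auto
  have commn: "act g ((phi ^^ k) x) = (phi ^^ k) (act g x)" if "g \<in> carrier G" "x \<in> X" for g x k
  proof (induction k)
    case 0 then show ?case by simp
  next
    case (Suc k)
    have "act g ((phi ^^ Suc k) x) = act g (phi ((phi ^^ k) x))" by simp
    also have "\<dots> = phi (act g ((phi ^^ k) x))" using comm[OF that(1) phinX[OF that(2)]] .
    also have "\<dots> = (phi ^^ Suc k) (act g x)" using Suc by simp
    finally show ?case .
  qed
  have fin: "finite P" unfolding P_def using fix_finite[OF N1] .
  have ne: "P \<noteq> {}" using RX RN unfolding P_def by auto
  have sub: "P \<subseteq> X" unfolding P_def by auto
  have per: "\<forall>p\<in>P. periodic_point phi p" unfolding P_def periodic_point_def using N1 by blast
  have img: "phi ` P = P"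
  proof
    show "phi ` P \<subseteq> P"
    proof
      fix z assume "z \<in> phi ` P"
      then obtain x where x: "x \<in> P" "z = phi x" by blast
      have "(phi ^^ N) (phi x) = phi ((phi ^^ N) x)" by (rule funpow_swap1[symmetric])
      then show "z \<in> P" using x phiX unfolding P_def by simp
    qed
    show "P \<subseteq> phi ` P"
    proof
      fix x assume x: "x \<in> P"
      define w where "w = (phi ^^ (N - 1)) x"
      have NN: "N = Suc (N - 1)" using N1 by simp
      have wX: "w \<in> X" unfolding w_def using x phinX unfolding P_def by simp
      have pw: "phi w = x"
      proof -
        have "phi w = (phi ^^ Suc (N - 1)) x" unfolding w_def by simp
        then show ?thesis using NN x unfolding P_def by simp
      qed
      have "(phi ^^ N) w = (phi ^^ (N - 1)) ((phi ^^ N) x)"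
        unfolding w_def by (metis comp_apply funpow_add add.commute)
      then have "w \<in> P" using wX x unfolding P_def w_def by simp
      then show "x \<in> phi ` P" using pw by force
    qed
  qed
  have act: "\<forall>g\<in>carrier G. \<forall>p\<in>P. act g p \<in> P"
  proof (intro ballI)
    fix g p assume g: "g \<in> carrier G" and p: "p \<in> P"
    have pX: "p \<in> X" using p unfolding P_def by simp
    have "act g p \<in> X" using group_action.element_image[OF ga g pX refl] .
    moreover have "(phi ^^ N) (act g p) = act g p" using commn[OF g pX, of N] p unfolding P_def by simp
    ultimately show "act g p \<in> P" unfolding P_def by simp
  qed
  show ?thesis using fin ne sub per img act by blast
qed


end
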